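(* Let $A\in M_n(\mathbb{C})$ be a generalized row stochastic matrix with constant row sum $c\in\mathbb{C}$, i.e. $\sum_{j=1}^n A_{ij}=c$ for all $i=1,\dots,n$, and let $\sigma=\|A\|_2$. Then: (1) $|c|\le\sigma$. (2) If $|c|=\sigma$, then $A$ also has constant column sum $c$, i.e. $\sum_{i=1}^n A_{ij}=c$ for all $j=1,\dots,n$ (so $A$ is a $c$-generalized doubly stochastic matrix). (3) If $|c|=\sigma$, then $\mu_{\mathbb{B}}(A^m)=\sigma^m$ for every $m\in\mathbb{N}$ and every block structure $\mathbb{B}\subseteq M_n(\mathbb{C})$.
   Context: $\|M\|_2$ denotes the spectral norm (largest singular value) of $M\in M_n(\mathbb{C})$. A block structure is a set of the form $\mathbb{B}=\{\operatorname{diag}(\delta_1I_{k_1},\dots,\delta_rI_{k_r},\Delta_1,\dots,\Delta_s)\mid \delta_i\in\mathbb{C},\ \Delta_j\in M_{n_j}(\mathbb{C})\}\subseteq M_n(\mathbb{C})$ for some $r,s\in\mathbb{N}_0$ and positive integers $k_i,n_j$ with $\sum_{i=1}^r k_i+\sum_{j=1}^s n_j=n$. The structured singular value $\mu_{\mathbb{B}}:M_n(\mathbb{C})\to[0,\infty)$ is defined by $\mu_{\mathbb{B}}(M)=0$ if $\det(I+M\Delta)\neq0$ for all $\Delta\in\mathbb{B}$, and otherwise $\mu_{\mathbb{B}}(M)=\big(\min\{\|\Delta\|_2\mid \Delta\in\mathbb{B},\ \det(I+M\Delta)=0\}\big)^{-1}$. A $c$-generalized doubly stochastic matrix is a square complex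 matrix all of whose row sums and all of whose column sums equal $c$. *)

theory Defs
  imports Complex_Main "Jordan_Normal_Form.Determinant"
begin

definition vec_norm2 :: "complex vec \<Rightarrow> real" where
  "vec_norm2 v = sqrt (\<Sum>i<dim_vec v. (cmod (v $ i))\<^sup>2)"

definition spec_norm :: "complex mat \<Rightarrow> real" where
  "spec_norm A = Sup {vec_norm2 (A *\<^sub>v v) | v. v \<in> carrier_vec (dim_col A) \<and> vec_norm2 v = 1}"

text \<open>Block structure diag(delta_1 I_{k_1},...,delta_r I_{k_r},Delta_1,...,Delta_s),
  given the list ks of scalar-block sizes and the list ns of full-block sizes.\<close>
definition block_structure :: "nat list \<Rightarrow> nat list \<Rightarrow> complex mat set" where
  "block_structure ks ns =
    {diag_block_mat (map (\<lambda>(d, k). d \<cdot>\<^sub>m 1\<^sub>m k) (zip ds ks) @ Ds) | ds Ds.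
       length ds = length ks \<and> length Ds = length ns \<and>
       (\<forall>j<length ns. Ds ! j \<in> carrier_mat (ns ! j) (ns ! j))}"

definition ssv :: "complex mat set \<Rightarrow> complex mat \<Rightarrow> real" where
  "ssv B M =
    (if \<forall>D\<in>B. det (1\<^sub>m (dim_row M) + M * D) \<noteq> 0 then 0
     else inverse (Inf {spec_norm D | D. D \<in> B \<and> det (1\<^sub>m (dim_row M) + M * D) = 0}))"

end

theory Submission
  imports Defs
begin

lemma norm2_sq: "(vec_norm2 v)^2 = (\<Sum>i<dim_vec v. (cmod (v $ i))\<^sup>2)"
  proof -
  have "0 \<le> (\<Sum>i<dim_vec v. (cmod (v $ i))\<^sup>2)" by (rule sum_nonneg) simp
  thus ?thesis unfolding vec_norm2_def by simp
qed

lemma norm2_nonneg: "vec_norm2 v \<ge> 0"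
  unfolding vec_norm2_def by (rule real_sqrt_ge_zero, rule sum_nonneg) simp

lemma norm2_zero: assumes "vec_norm2 v = 0" shows "v = 0\<^sub>v (dim_vec v)"
proof (rule eq_vecI)
  fix i assume i: "i < dim_vec (0\<^sub>v (dim_vec v))"
  have "(\<Sum>i<dim_vec v. (cmod (v $ i))\<^sup>2) = 0" using norm2_sq[of v] assms by simp
  hence "\<forall>j\<in>{..<dim_vec v}. (cmod (v $ j))\<^sup>2 = 0"
    by (subst sum_nonneg_eq_0_iff[symmetric]) auto
  thus "v $ i = 0\<^sub>v (dim_vec v) $ i" using i by auto
qed simp

lemma norm2_smult: "vec_norm2 (a \<cdot>\<^sub>v v) = cmod a * vec_norm2 v"
proof -
  have "(\<Sum>i<dim_vec v. (cmod ((a \<cdot>\<^sub>v v) $ i))\<^sup>2) = (cmod a)^2 * (\<Sum>i<dim_vec v. (cmod (v $ i))\<^sup>2)"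
    by (simp add: sum_distrib_left norm_mult power_mult_distrib)
  thus ?thesis unfolding vec_norm2_def by (simp add: real_sqrt_mult)
qed

lemma mult_vec_sum: assumes "A \<in> carrier_mat n n" "v \<in> carrier_vec n" "i < n"
  shows "(A *\<^sub>v v) $ i = (\<Sum>j<n. A $$ (i,j) * v $ j)"
  using assms by (simp add: scalar_prod_def lessThan_atLeast0)

lemma unit_entry: assumes "vec_norm2 v = 1" "j < dim_vec v" shows "cmod (v $ j) \<le> 1"
proof -
  have "(cmod (v $ j))^2 \<le> (\<Sum>i<dim_vec v. (cmod (v $ i))\<^sup>2)"
    using assms(2) by (intro member_le_sum) auto
  also have "\<dots> = 1" using norm2_sq[of v] assms(1) by simp
  finally show ?thesis by (simp add: power_le_one_iff abs_le_square_iff)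
qed

lemma spec_bdd: assumes A: "A \<in> carrier_mat n n"
  shows "bdd_above {vec_norm2 (A *\<^sub>v v) | v. v \<in> carrier_vec (dim_col A) \<and> vec_norm2 v = 1}"
proof -
  let ?K = "sqrt (\<Sum>i<n. (\<Sum>j<n. cmod (A $$ (i,j)))^2)"
  show ?thesis unfolding bdd_above_def
  proof (intro exI[of _ ?K] allI impI ballI)
    fix x assume "x \<in> {vec_norm2 (A *\<^sub>v v) | v. v \<in> carrier_vec (dim_col A) \<and> vec_norm2 v = 1}"
    then obtain v where v: "v \<in> carrier_vec n" "vec_norm2 v = 1" and x: "x = vec_norm2 (A *\<^sub>v v)"
      using A by auto
    have "\<And>i. i < n \<Longrightarrow> cmod ((A *\<^sub>v v) $ i) \<le> (\<Sum>j<n. cmod (A $$ (i,j)))"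
    proof -
      fix i assume i: "i < n"
      have "cmod ((A *\<^sub>v v) $ i) = cmod (\<Sum>j<n. A $$ (i,j) * v $ j)" using mult_vec_sum[OF A v(1) i] by simp
      also have "\<dots> \<le> (\<Sum>j<n. cmod (A $$ (i,j) * v $ j))" by (rule norm_sum)
      also have "\<dots> \<le> (\<Sum>j<n. cmod (A $$ (i,j)))"
      proof (rule sum_mono)
        fix j assume "j \<in> {..<n}"
        hence "cmod (v $ j) \<le> 1" using unit_entry[OF v(2)] v(1) by auto
        thus "cmod (A $$ (i,j) * v $ j) \<le> cmod (A $$ (i,j))"
          by (simp add: norm_mult mult_left_le)
      qed
      finally show "cmod ((A *\<^sub>v v) $ i) \<le> (\<Sum>j<n. cmod (A $$ (i,j)))" .
    qed
    hence "(\<Sum>i<n. (cmod ((A *\<^sub>v v) $ i))\<^sup>2) \<le> (\<Sum>i<n. (\<Sum>j<n. cmod (A $$ (i,j)))^2)"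
      by (intro sum_mono power_mono) auto
    thus "x \<le> ?K" unfolding x vec_norm2_def using A by simp
  qed
qed

lemma spec_K: assumes A: "A \<in> carrier_mat n n" and x: "x \<in> carrier_vec n"
  shows "vec_norm2 (A *\<^sub>v x) \<le> spec_norm A * vec_norm2 x"
proof (cases "vec_norm2 x = 0")
  case True
  hence "x = 0\<^sub>v n" using norm2_zero[of x] x by auto
  hence "A *\<^sub>v x = 0\<^sub>v n" using A by auto
  hence "vec_norm2 (A *\<^sub>v x) = 0" unfolding vec_norm2_def by simp
  thus ?thesis using True by simp
next
  case False
  hence pos: "vec_norm2 x > 0" using norm2_nonneg[of x] by linarith
  define v where "v = (1 / complex_of_real (vec_norm2 x)) \<cdot>\<^sub>v x"
  have v1: "vec_norm2 v = 1" unfolding v_def norm2_smult using pos by (simp add: norm_divide)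
  have vc: "v \<in> carrier_vec (dim_col A)" using A x v_def by auto
  have Av: "A *\<^sub>v v = (1 / complex_of_real (vec_norm2 x)) \<cdot>\<^sub>v (A *\<^sub>v x)"
    unfolding v_def using A x by (simp add: mult_mat_vec)
  have "vec_norm2 (A *\<^sub>v v) \<le> spec_norm A"
    unfolding spec_norm_def using v1 vc by (intro cSup_upper spec_bdd[OF A]) auto
  hence "vec_norm2 (A *\<^sub>v x) / vec_norm2 x \<le> spec_norm A"
    unfolding Av norm2_smult using pos by (simp add: norm_divide)
  thus ?thesis using pos by (simp add: divide_le_eq mult.commute)
qed

lemma norm2_unit: "k < n \<Longrightarrow> vec_norm2 (unit_vec n k) = 1"
proof -
  assume k: "k < n"
  have "(\<Sum>i<n. (cmod (unit_vec n k $ i))\<^sup>2) = (\<Sum>i<n. if i = k then 1 else 0)"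
    by (rule sum.cong) (auto simp: unit_vec_def)
  also have "\<dots> = 1" using k by simp
  finally show ?thesis unfolding vec_norm2_def by simp
qed

lemma spec_nonneg: assumes A: "A \<in> carrier_mat n n" and n: "n > 0" shows "spec_norm A \<ge> 0"
proof -
  have "vec_norm2 (A *\<^sub>v unit_vec n 0) \<le> spec_norm A * vec_norm2 (unit_vec n 0)"
    using spec_K[OF A] n by simp
  thus ?thesis using norm2_unit[OF n] norm2_nonneg[of "A *\<^sub>v unit_vec n 0"] by simp
qed

lemma pow_K: assumes A: "A \<in> carrier_mat n n" and y: "y \<in> carrier_vec n" and s: "spec_norm A \<ge> 0"
  shows "vec_norm2 ((A ^\<^sub>m m) *\<^sub>v y) \<le> spec_norm A ^ m * vec_norm2 y"
  using y
proof (induction m arbitrary: y)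
  case 0
  thus ?case using A by simp
next
  case (Suc m)
  have "(A ^\<^sub>m Suc m) *\<^sub>v y = (A ^\<^sub>m m) *\<^sub>v (A *\<^sub>v y)"
    using A Suc.prems by (simp del: assoc_mult_mat_vec add: assoc_mult_mat_vec[of _ n n _ n])
  also have "vec_norm2 \<dots> \<le> spec_norm A ^ m * vec_norm2 (A *\<^sub>v y)"
    using Suc.IH[of "A *\<^sub>v y"] mult_mat_vec_carrier[OF A Suc.prems] by simp
  also have "\<dots> \<le> spec_norm A ^ m * (spec_norm A * vec_norm2 y)"
    using spec_K[OF A Suc.prems] s by (intro mult_left_mono) auto
  finally show ?case by (simp add: algebra_simps)
qed

lemma pow_ones: assumes A: "A \<in> carrier_mat n n" and rs: "\<forall>i<n. (\<Sum>j<n. A $$ (i, j)) = c"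
  shows "(A ^\<^sub>m m) *\<^sub>v (vec n (\<lambda>_. (1::complex))) = c ^ m \<cdot>\<^sub>v (vec n (\<lambda>_. (1::complex)))"
proof (induction m)
  case 0
  then show ?case using A by (intro eq_vecI) auto
next
  case (Suc m)
  have A1: "A *\<^sub>v (vec n (\<lambda>_. (1::complex))) = c \<cdot>\<^sub>v (vec n (\<lambda>_. (1::complex)))"
  proof (intro eq_vecI)
    fix i assume "i < dim_vec (c \<cdot>\<^sub>v (vec n (\<lambda>_. (1::complex))))"
    hence i: "i < n" by simp
    show "(A *\<^sub>v (vec n (\<lambda>_. (1::complex)))) $ i = (c \<cdot>\<^sub>v (vec n (\<lambda>_. (1::complex)))) $ i"
      using mult_vec_sum[OF A _ i, of "(vec n (\<lambda>_. (1::complex)))"] rs i by simp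
  qed (use A in simp)
  have "(A ^\<^sub>m Suc m) *\<^sub>v (vec n (\<lambda>_. (1::complex))) = (A ^\<^sub>m m) *\<^sub>v (A *\<^sub>v (vec n (\<lambda>_. (1::complex))))"
    using A by (simp del: assoc_mult_mat_vec add: assoc_mult_mat_vec[of _ n n _ n])
  also have "\<dots> = c \<cdot>\<^sub>v ((A ^\<^sub>m m) *\<^sub>v (vec n (\<lambda>_. (1::complex))))" unfolding A1
    by (rule mult_mat_vec[of _ n n]) (use A in auto)
  also have "\<dots> = c ^ Suc m \<cdot>\<^sub>v (vec n (\<lambda>_. (1::complex)))" unfolding Suc.IH by (simp add: smult_smult_assoc)
  finally show ?case .
qed

lemma norm2_ones: "vec_norm2 ((vec n (\<lambda>_. (1::complex)))) = sqrt n"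
  unfolding vec_norm2_def by simp

lemma part1: assumes A: "A \<in> carrier_mat n n" and n: "n > 0" and rs: "\<forall>i<n. (\<Sum>j<n. A $$ (i, j)) = c"
  shows "cmod c \<le> spec_norm A"
proof -
  have "vec_norm2 (A *\<^sub>v (vec n (\<lambda>_. (1::complex)))) \<le> spec_norm A * vec_norm2 ((vec n (\<lambda>_. (1::complex))))" using spec_K[OF A] by simp
  moreover have "A *\<^sub>v (vec n (\<lambda>_. (1::complex))) = c \<cdot>\<^sub>v (vec n (\<lambda>_. (1::complex)))" using pow_ones[OF A rs, of 1] A by simp
  ultimately have "cmod c * sqrt n \<le> spec_norm A * sqrt n" by (simp add: norm2_smult norm2_ones)
  thus ?thesis using n by simp
qed

lemma Kf: assumes A: "A \<in> carrier_mat n n" and s: "spec_norm A \<ge> 0"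
  shows "(\<Sum>i<n. (cmod (\<Sum>j<n. A $$ (i,j) * f j))^2) \<le> (spec_norm A)^2 * (\<Sum>i<n. (cmod (f i))^2)"
proof -
  let ?x = "vec n f"
  have x: "?x \<in> carrier_vec n" by simp
  have "(vec_norm2 (A *\<^sub>v ?x))^2 \<le> (spec_norm A * vec_norm2 ?x)^2"
    using spec_K[OF A x] norm2_nonneg[of "A *\<^sub>v ?x"] by (intro power_mono) auto
  also have "\<dots> = (spec_norm A)^2 * (\<Sum>i<n. (cmod (f i))^2)"
    unfolding power_mult_distrib norm2_sq by simp
  also have "(vec_norm2 (A *\<^sub>v ?x))^2 = (\<Sum>i<n. (cmod (\<Sum>j<n. A $$ (i,j) * f j))^2)"
    unfolding norm2_sq
  proof (intro sum.cong)
    show "{..<dim_vec (A *\<^sub>v ?x)} = {..<n}" using A by simp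
    fix i assume "i \<in> {..<n}"
    thus "(cmod ((A *\<^sub>v ?x) $ i))\<^sup>2 = (cmod (\<Sum>j<n. A $$ (i,j) * f j))^2"
      using mult_vec_sum[OF A x, of i] by simp
  qed
  finally show ?thesis .
qed

lemma quad0: assumes "\<forall>t::real. \<alpha> * t \<le> \<beta> * t^2" shows "\<alpha> = 0"
proof (rule ccontr)
  assume ne: "\<alpha> \<noteq> 0"
  define t where "t = \<alpha> / (2 * (\<bar>\<beta>\<bar> + 1))"
  define d where "d = 2 * (\<bar>\<beta>\<bar> + 1)"
  have d: "d > 0" unfolding d_def by simp
  have "\<alpha> * t \<le> \<beta> * t^2" using assms by simp
  hence "\<alpha>^2 / d \<le> (\<beta> * \<alpha>^2) / d^2" unfolding t_def d_def[symmetric]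
    by (simp add: power2_eq_square power_divide)
  hence "(\<alpha>^2 / d) * d^2 \<le> ((\<beta> * \<alpha>^2) / d^2) * d^2" using d by (intro mult_right_mono) auto
  hence "\<alpha> * \<alpha> * (2 * (\<bar>\<beta>\<bar> + 1)) \<le> \<beta> * \<alpha>^2"
    using d unfolding d_def[symmetric] by (simp add: power2_eq_square)
  moreover have "\<alpha>^2 > 0" using ne by simp
  moreover have "\<beta> * \<alpha>^2 \<le> \<bar>\<beta>\<bar> * \<alpha>^2" by (simp add: mult_right_mono)
  ultimately have "\<alpha>^2 * (2 * (\<bar>\<beta>\<bar> + 1)) \<le> \<bar>\<beta>\<bar> * \<alpha>^2" by (simp add: power2_eq_square)
  with \<open>\<alpha>^2 > 0\<close> show False
    by (smt (verit, ccfv_SIG) mult_le_cancel_right mult.commute abs_ge_zero)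
qed

lemma expand: "(\<Sum>i<n. (a + t*p i)^2 + (b + t*q i)^2) =
   real n*(a^2+b^2) + t*(2*(a*(\<Sum>i<n. p i) + b*(\<Sum>i<n. q i))) + t^2*(\<Sum>i<n. (p i)^2 + (q i)^2)"
proof -
  have "(\<Sum>i<n. (a + t*p i)^2 + (b + t*q i)^2) =
        (\<Sum>i<n. (a^2+b^2) + (t*2*a) * p i + (t*2*b) * q i + t^2*((p i)^2 + (q i)^2))"
    by (intro sum.cong) (auto simp: power2_eq_square algebra_simps)
  also have "\<dots> = real n*(a^2+b^2) + t*(2*(a*(\<Sum>i<n. p i) + b*(\<Sum>i<n. q i))) + t^2*(\<Sum>i<n. (p i)^2 + (q i)^2)"
    unfolding sum.distrib sum_distrib_left[symmetric] by (simp add: algebra_simps)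
  finally show ?thesis .
qed

lemma delta_sum: fixes A :: "complex mat" assumes k: "k < n"
  shows "(\<Sum>j<n. A $$ (i,j) * (1 + (if j = k then w else 0))) = (\<Sum>j<n. A $$ (i,j)) + A $$ (i,k) * w"
proof -
  have "(\<Sum>j<n. A $$ (i,j) * (1 + (if j = k then w else 0))) = (\<Sum>j<n. A $$ (i,j)) + (\<Sum>j<n. if j = k then A $$ (i,j) * w else 0)"
    unfolding sum.distrib[symmetric] by (intro sum.cong) (auto simp: algebra_simps)
  thus ?thesis using k by simp
qed

lemma delta_sum2: assumes k: "k < n"
  shows "(\<Sum>i<n. (cmod (1 + (if i = k then w else 0)))^2) = real n + ((cmod (1 + w))^2 - 1)"
proof -
  have "(\<Sum>i<n. (cmod (1 + (if i = k then w else 0)))^2) = (\<Sum>i<n. 1 + (if i = k then (cmod (1 + w))^2 - 1 else 0))"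
    by (intro sum.cong) auto
  also have "\<dots> = real n + ((cmod (1 + w))^2 - 1)" using k by (simp add: sum.distrib)
  finally show ?thesis .
qed

lemma part2: assumes A: "A \<in> carrier_mat n n" and n: "n > 0" and rs: "\<forall>i<n. (\<Sum>j<n. A $$ (i, j)) = c"
  and eq: "cmod c = spec_norm A" and k: "k < n"
  shows "(\<Sum>i<n. A $$ (i, k)) = c"
proof -
  have s: "spec_norm A \<ge> 0" using spec_nonneg[OF A n] .
  define a where "a = Re c"
  define b where "b = Im c"
  define p where "p i = Re (A $$ (i,k))" for i
  define q where "q i = Im (A $$ (i,k))" for i
  define P where "P = (\<Sum>i<n. p i)"
  define Q where "Q = (\<Sum>i<n. q i)"
  have sig2: "(spec_norm A)^2 = a^2 + b^2" unfolding eq[symmetric] a_def b_def by (simp add: cmod_power2)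
  have key: "(\<Sum>i<n. (cmod (c + A $$ (i,k) * w))^2) \<le> (a^2+b^2) * (real n + ((cmod (1 + w))^2 - 1))" for w
    using Kf[OF A s, of "\<lambda>j. 1 + (if j = k then w else 0)"] unfolding sig2 delta_sum[OF k] delta_sum2[OF k]
    using rs by simp
  have e1: "a*P + b*Q = a^2 + b^2"
  proof -
    have "\<forall>t::real. (2*(a*P + b*Q) - 2*(a^2+b^2)) * t \<le> ((a^2+b^2) - (\<Sum>i<n. (p i)^2 + (q i)^2)) * t^2"
    proof
      fix t :: real
      have "(\<Sum>i<n. (cmod (c + A $$ (i,k) * complex_of_real t))^2) = (\<Sum>i<n. (a + t*p i)^2 + (b + t*q i)^2)"
        by (intro sum.cong) (auto simp: cmod_power2 a_def b_def p_def q_def algebra_simps)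
      also have "\<dots> = real n*(a^2+b^2) + t*(2*(a*P + b*Q)) + t^2*(\<Sum>i<n. (p i)^2 + (q i)^2)"
        unfolding expand P_def Q_def ..
      finally have "real n*(a^2+b^2) + t*(2*(a*P + b*Q)) + t^2*(\<Sum>i<n. (p i)^2 + (q i)^2)
          \<le> (a^2+b^2) * (real n + ((cmod (1 + complex_of_real t))^2 - 1))" using key[of "complex_of_real t"] by simp
      moreover have "(cmod (1 + complex_of_real t))^2 = (1 + t)^2" by (simp add: cmod_power2)
      ultimately show "(2*(a*P + b*Q) - 2*(a^2+b^2)) * t \<le> ((a^2+b^2) - (\<Sum>i<n. (p i)^2 + (q i)^2)) * t^2"
        by (simp add: power2_eq_square algebra_simps)
    qed
    from quad0[OF this] show ?thesis by simp
  qed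
  have e2: "b*P - a*Q = 0"
  proof -
    have "\<forall>t::real. (2*(b*P - a*Q)) * t \<le> ((a^2+b^2) - (\<Sum>i<n. (q i)^2 + (p i)^2)) * t^2"
    proof
      fix t :: real
      have "(\<Sum>i<n. (cmod (c + A $$ (i,k) * (\<i> * complex_of_real t)))^2) = (\<Sum>i<n. (a + t*(- q i))^2 + (b + t*p i)^2)"
        by (intro sum.cong) (auto simp: cmod_power2 a_def b_def p_def q_def algebra_simps)
      also have "\<dots> = real n*(a^2+b^2) + t*(2*(a*(-Q) + b*P)) + t^2*(\<Sum>i<n. (q i)^2 + (p i)^2)"
        unfolding expand P_def Q_def by (simp add: sum_negf)
      finally have "real n*(a^2+b^2) + t*(2*(a*(-Q) + b*P)) + t^2*(\<Sum>i<n. (q i)^2 + (p i)^2)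
          \<le> (a^2+b^2) * (real n + ((cmod (1 + \<i> * complex_of_real t))^2 - 1))" using key[of "\<i> * complex_of_real t"] by simp
      moreover have "(cmod (1 + \<i> * complex_of_real t))^2 = 1 + t^2" by (simp add: cmod_power2)
      ultimately show "(2*(b*P - a*Q)) * t \<le> ((a^2+b^2) - (\<Sum>i<n. (q i)^2 + (p i)^2)) * t^2"
        by (simp add: power2_eq_square algebra_simps)
    qed
    from quad0[OF this] show ?thesis by simp
  qed
  show ?thesis
  proof (cases "c = 0")
    case False
    hence ab: "a^2 + b^2 \<noteq> 0" unfolding a_def b_def using complex_eq_iff by force
    have "(a^2+b^2) * P = a*(a*P+b*Q) + b*(b*P - a*Q)" by (simp add: algebra_simps power2_eq_square)
    also have "\<dots> = a * (a^2+b^2)" using e1 e2 by simp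
    finally have "(a^2+b^2) * P = a * (a^2+b^2)" .
    hence hP: "P = a" using ab by (metis mult.commute mult_cancel_left)
    have "(a^2+b^2) * Q = b*(a*P+b*Q) - a*(b*P - a*Q)" by (simp add: algebra_simps power2_eq_square)
    also have "\<dots> = b * (a^2+b^2)" using e1 e2 by simp
    finally have "(a^2+b^2) * Q = b * (a^2+b^2)" .
    hence hQ: "Q = b" using ab by (metis mult.commute mult_cancel_left)
    show ?thesis using hP hQ unfolding P_def Q_def p_def q_def a_def b_def
      by (simp add: complex_eq_iff Re_sum Im_sum)
  next
    case True
    hence "a = 0" "b = 0" unfolding a_def b_def by auto
    have "(\<Sum>i<n. (cmod (c + A $$ (i,k) * 1))^2) \<le> 0"
      using key[of 1] \<open>a = 0\<close> \<open>b = 0\<close> by simp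
    moreover have "(\<Sum>i<n. (cmod (c + A $$ (i,k) * 1))^2) \<ge> 0" by (rule sum_nonneg) simp
    ultimately have "(\<Sum>i<n. (cmod (c + A $$ (i,k) * 1))^2) = 0" by linarith
    hence "\<forall>i\<in>{..<n}. (cmod (c + A $$ (i,k) * 1))^2 = 0"
      by (subst sum_nonneg_eq_0_iff[symmetric]) auto
    hence "\<forall>i<n. A $$ (i,k) = 0" using True by auto
    thus ?thesis using True by simp
  qed
qed

lemma bs_carrier: assumes D: "D \<in> block_structure ks ns" and sn: "sum_list ks + sum_list ns = n"
  shows "D \<in> carrier_mat n n"
proof -
  obtain ds Ds where D_def: "D = diag_block_mat (map (\<lambda>(d, k). d \<cdot>\<^sub>m 1\<^sub>m k) (zip ds ks) @ Ds)"
    and l1: "length ds = length ks" and l2: "length Ds = length ns"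
    and c: "\<forall>j<length ns. Ds ! j \<in> carrier_mat (ns ! j) (ns ! j)"
    using D unfolding block_structure_def by blast
  have r1: "map dim_row (map (\<lambda>(d, k). d \<cdot>\<^sub>m 1\<^sub>m k) (zip ds ks)) = ks"
    using l1 by (intro nth_equalityI) auto
  have c1: "map dim_col (map (\<lambda>(d, k). d \<cdot>\<^sub>m 1\<^sub>m k) (zip ds ks)) = ks"
    using l1 by (intro nth_equalityI) auto
  have r2: "map dim_row Ds = ns" using l2 c by (intro nth_equalityI) auto
  have c2: "map dim_col Ds = ns" using l2 c by (intro nth_equalityI) auto
  have "dim_row D = n" unfolding D_def dim_diag_block_mat(1) map_append sum_list_append r1 r2 using sn .
  moreover have "dim_col D = n" unfolding D_def dim_diag_block_mat(2) map_append sum_list_append c1 c2 using sn .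
  ultimately show ?thesis by auto
qed

lemma scal_diag: "diag_block_mat (map (\<lambda>k. a \<cdot>\<^sub>m (1\<^sub>m k :: complex mat)) L) = a \<cdot>\<^sub>m 1\<^sub>m (sum_list L)"
proof (induction L)
  case Nil
  then show ?case by (intro eq_matI) auto
next
  case (Cons k L)
  show ?case unfolding list.map diag_block_mat.simps Let_def Cons.IH
    by (intro eq_matI) auto
qed

lemma D0_in: assumes sn: "sum_list ks + sum_list ns = n"
  shows "a \<cdot>\<^sub>m 1\<^sub>m n \<in> block_structure ks ns"
proof -
  have z: "map (\<lambda>(d, k). d \<cdot>\<^sub>m (1\<^sub>m k :: complex mat)) (zip (replicate (length ks) a) ks) = map (\<lambda>k. a \<cdot>\<^sub>m 1\<^sub>m k) ks"
    by (induct ks) auto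
  have "a \<cdot>\<^sub>m 1\<^sub>m n = diag_block_mat (map (\<lambda>(d, k). d \<cdot>\<^sub>m 1\<^sub>m k) (zip (replicate (length ks) a) ks) @ map (\<lambda>k. a \<cdot>\<^sub>m 1\<^sub>m k) ns)"
    unfolding z map_append[symmetric] scal_diag using sn by simp
  thus ?thesis unfolding block_structure_def
    by (intro CollectI exI[of _ "replicate (length ks) a"] exI[of _ "map (\<lambda>k. a \<cdot>\<^sub>m 1\<^sub>m k) ns"]) auto
qed

lemma scal_mult: assumes v: "v \<in> carrier_vec n" shows "(a \<cdot>\<^sub>m 1\<^sub>m n) *\<^sub>v v = a \<cdot>\<^sub>v (v :: complex vec)"
proof -
  have "(a \<cdot>\<^sub>m 1\<^sub>m n) *\<^sub>v v = (a \<cdot>\<^sub>m 1\<^sub>m n) *\<^sub>v (1\<^sub>m n *\<^sub>v v)" using v by simp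
  also have "\<dots> = a \<cdot>\<^sub>v v"
  proof (intro eq_vecI)
    fix i assume "i < dim_vec (a \<cdot>\<^sub>v v)"
    hence i: "i < n" using v by simp
    have "((a \<cdot>\<^sub>m 1\<^sub>m n) *\<^sub>v (1\<^sub>m n *\<^sub>v v)) $ i = (\<Sum>j = 0..<n. a * (if j = i then 1 else 0) * v $ j)"
      using i v by (simp add: scalar_prod_def)
    also have "\<dots> = (\<Sum>j = 0..<n. if j = i then a * v $ j else 0)" by (rule sum.cong) auto
    also have "\<dots> = (a \<cdot>\<^sub>v v) $ i" using i v by simp
    finally show "((a \<cdot>\<^sub>m 1\<^sub>m n) *\<^sub>v (1\<^sub>m n *\<^sub>v v)) $ i = (a \<cdot>\<^sub>v v) $ i" .
  qed (use v in simp)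
  finally show ?thesis .
qed

lemma spec_scal: assumes n: "n > 0" shows "spec_norm (a \<cdot>\<^sub>m 1\<^sub>m n) = cmod a"
proof -
  have "{vec_norm2 ((a \<cdot>\<^sub>m 1\<^sub>m n) *\<^sub>v v) | v. v \<in> carrier_vec (dim_col (a \<cdot>\<^sub>m (1\<^sub>m n :: complex mat))) \<and> vec_norm2 v = 1} = {cmod a}"
  proof (intro equalityI subsetI)
    fix x assume "x \<in> {vec_norm2 ((a \<cdot>\<^sub>m 1\<^sub>m n) *\<^sub>v v) | v. v \<in> carrier_vec (dim_col (a \<cdot>\<^sub>m (1\<^sub>m n :: complex mat))) \<and> vec_norm2 v = 1}"
    then obtain v where "v \<in> carrier_vec n" "vec_norm2 v = 1" "x = vec_norm2 ((a \<cdot>\<^sub>m 1\<^sub>m n) *\<^sub>v v)" by auto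
    thus "x \<in> {cmod a}" using scal_mult[of v n a] by (simp add: norm2_smult)
  next
    fix x assume "x \<in> {cmod a}"
    hence "x = vec_norm2 ((a \<cdot>\<^sub>m 1\<^sub>m n) *\<^sub>v unit_vec n 0)"
      using scal_mult[of "unit_vec n 0" n a] norm2_unit[OF n] by (simp add: norm2_smult)
    thus "x \<in> {vec_norm2 ((a \<cdot>\<^sub>m 1\<^sub>m n) *\<^sub>v v) | v. v \<in> carrier_vec (dim_col (a \<cdot>\<^sub>m (1\<^sub>m n :: complex mat))) \<and> vec_norm2 v = 1}"
      using norm2_unit[OF n] by auto
  qed
  thus ?thesis unfolding spec_norm_def by simp
qed

lemma low: assumes A: "A \<in> carrier_mat n n" and s: "spec_norm A \<ge> 0" and D: "D \<in> carrier_mat n n"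
  and det: "det (1\<^sub>m n + A ^\<^sub>m m * D) = 0"
  shows "1 \<le> spec_norm A ^ m * spec_norm D"
proof -
  have Mc: "1\<^sub>m n + A ^\<^sub>m m * D \<in> carrier_mat n n" using A D by auto
  obtain v where v: "v \<in> carrier_vec n" "v \<noteq> 0\<^sub>v n" "(1\<^sub>m n + A ^\<^sub>m m * D) *\<^sub>v v = 0\<^sub>v n"
    using det det_0_iff_vec_prod_zero[OF Mc] by blast
  define w where "w = A ^\<^sub>m m *\<^sub>v (D *\<^sub>v v)"
  have "(1\<^sub>m n + A ^\<^sub>m m * D) *\<^sub>v v = v + w"
    unfolding w_def using A D v(1)
    by (subst add_mult_distrib_mat_vec[of _ n n]) (auto simp del: assoc_mult_mat_vec simp: assoc_mult_mat_vec[of _ n n _ n])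
  hence vw: "v + w = 0\<^sub>v n" using v(3) by simp
  have wc: "w \<in> carrier_vec n" unfolding w_def
    using mult_mat_vec_carrier[OF pow_carrier_mat[OF A] mult_mat_vec_carrier[OF D v(1)]] .
  have ent: "v $ i = - (w $ i)" if "i < n" for i
  proof -
    have "(v + w) $ i = 0" using vw that by simp
    thus ?thesis using that wc v(1) by (simp add: eq_neg_iff_add_eq_0)
  qed
  have nv: "vec_norm2 v = vec_norm2 w"
    unfolding vec_norm2_def using v(1) wc ent by (intro arg_cong[of _ _ sqrt] sum.cong) auto
  have pos: "vec_norm2 v > 0"
  proof (rule ccontr)
    assume "\<not> vec_norm2 v > 0"
    hence "vec_norm2 v = 0" using norm2_nonneg[of v] by simp
    hence "v = 0\<^sub>v n" using norm2_zero[of v] v(1) by simp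
    thus False using v(2) by simp
  qed
  have Dv: "D *\<^sub>v v \<in> carrier_vec n" using D v(1) by simp
  have "vec_norm2 w \<le> spec_norm A ^ m * vec_norm2 (D *\<^sub>v v)"
    unfolding w_def by (rule pow_K[OF A Dv s])
  also have "\<dots> \<le> spec_norm A ^ m * (spec_norm D * vec_norm2 v)"
    using spec_K[OF D v(1)] s by (intro mult_left_mono) auto
  finally have "1 * vec_norm2 v \<le> (spec_norm A ^ m * spec_norm D) * vec_norm2 v"
    using nv by (simp add: algebra_simps)
  thus ?thesis using pos by (meson mult_le_cancel_right_pos)
qed

lemma part3: assumes A: "A \<in> carrier_mat n n" and n: "n > 0" and rs: "\<forall>i<n. (\<Sum>j<n. A $$ (i, j)) = c"
  and eq: "cmod c = spec_norm A" and m: "m \<ge> 1" and sn: "sum_list ks + sum_list ns = n"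
  shows "ssv (block_structure ks ns) (A ^\<^sub>m m) = spec_norm A ^ m"
proof -
  have s: "spec_norm A \<ge> 0" using spec_nonneg[OF A n] .
  have dr: "dim_row (A ^\<^sub>m m) = n" using A by simp
  show ?thesis
  proof (cases "spec_norm A = 0")
    case True
    have "\<forall>D\<in>block_structure ks ns. det (1\<^sub>m n + A ^\<^sub>m m * D) \<noteq> 0"
    proof (intro ballI notI)
      fix D assume D: "D \<in> block_structure ks ns" and d: "det (1\<^sub>m n + A ^\<^sub>m m * D) = 0"
      have "1 \<le> spec_norm A ^ m * spec_norm D" using low[OF A s bs_carrier[OF D sn] d] .
      thus False using True m by (simp add: power_0_left)
    qed
    thus ?thesis unfolding ssv_def dr using True m by (simp add: power_0_left)
  next
    case False
    hence sp: "spec_norm A > 0" using s by simp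
    hence c0: "c \<noteq> 0" using eq by auto
    define a where "a = - 1 / c ^ m"
    define D0 where "D0 = a \<cdot>\<^sub>m (1\<^sub>m n :: complex mat)"
    define ones where "ones = vec n (\<lambda>_. (1::complex))"
    have D0B: "D0 \<in> block_structure ks ns" unfolding D0_def using D0_in[OF sn] .
    have D0c: "D0 \<in> carrier_mat n n" unfolding D0_def by simp
    have oc: "ones \<in> carrier_vec n" unfolding ones_def by simp
    have "(1\<^sub>m n + A ^\<^sub>m m * D0) *\<^sub>v ones = ones + A ^\<^sub>m m *\<^sub>v (D0 *\<^sub>v ones)"
      using A D0c oc
      by (subst add_mult_distrib_mat_vec[of _ n n]) (auto simp del: assoc_mult_mat_vec simp: assoc_mult_mat_vec[of _ n n _ n])
    also have "D0 *\<^sub>v ones = a \<cdot>\<^sub>v ones" unfolding D0_def using scal_mult[OF oc] .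
    also have "A ^\<^sub>m m *\<^sub>v (a \<cdot>\<^sub>v ones) = a \<cdot>\<^sub>v (A ^\<^sub>m m *\<^sub>v ones)"
      by (rule mult_mat_vec[of _ n n]) (use A oc in auto)
    also have "A ^\<^sub>m m *\<^sub>v ones = c ^ m \<cdot>\<^sub>v ones" unfolding ones_def using pow_ones[OF A rs] .
    also have "ones + a \<cdot>\<^sub>v (c ^ m \<cdot>\<^sub>v ones) = 0\<^sub>v n"
      unfolding ones_def a_def using c0 by (intro eq_vecI) auto
    finally have "(1\<^sub>m n + A ^\<^sub>m m * D0) *\<^sub>v ones = 0\<^sub>v n" .
    moreover have "ones \<noteq> 0\<^sub>v n"
    proof
      assume "ones = 0\<^sub>v n"
      hence "ones $ 0 = 0\<^sub>v n $ 0" by simp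
      thus False unfolding ones_def using n by simp
    qed
    moreover have "1\<^sub>m n + A ^\<^sub>m m * D0 \<in> carrier_mat n n" using A D0c by auto
    ultimately have detD0: "det (1\<^sub>m n + A ^\<^sub>m m * D0) = 0"
      using det_0_iff_vec_prod_zero[of "1\<^sub>m n + A ^\<^sub>m m * D0" n] oc by blast
    have snD0: "spec_norm D0 = 1 / spec_norm A ^ m"
      unfolding D0_def spec_scal[OF n] a_def eq[symmetric] by (simp add: norm_divide norm_power)
    let ?S = "{spec_norm D | D. D \<in> block_structure ks ns \<and> det (1\<^sub>m n + A ^\<^sub>m m * D) = 0}"
    have "Inf ?S = 1 / spec_norm A ^ m"
    proof (rule cInf_eq_minimum)
      show "1 / spec_norm A ^ m \<in> ?S" using D0B detD0 snD0 by force
    next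
      fix x assume "x \<in> ?S"
      then obtain D where D: "D \<in> block_structure ks ns" "det (1\<^sub>m n + A ^\<^sub>m m * D) = 0" "x = spec_norm D"
        by blast
      have "1 \<le> spec_norm A ^ m * x" using low[OF A s bs_carrier[OF D(1) sn] D(2)] D(3) by simp
      thus "1 / spec_norm A ^ m \<le> x" using sp by (simp add: divide_le_eq mult.commute)
    qed
    moreover have "\<not> (\<forall>D\<in>block_structure ks ns. det (1\<^sub>m n + A ^\<^sub>m m * D) \<noteq> 0)"
      using D0B detD0 by blast
    ultimately show ?thesis unfolding ssv_def dr by auto
  qed
qed

theorem proposition2p1:
  fixes A :: "complex mat" and n :: nat and c :: complex
  assumes n_pos: "n > 0"
    and A_carrier: "A \<in> carrier_mat n n"
    and row_sums: "\<forall>i<n. (\<Sum>j<n. A $$ (i, j)) = c"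
  shows "cmod c \<le> spec_norm A \<and>
         (cmod c = spec_norm A \<longrightarrow> (\<forall>j<n. (\<Sum>i<n. A $$ (i, j)) = c)) \<and>
         (cmod c = spec_norm A \<longrightarrow>
         (\<forall>m ks ns. m \<ge> 1 \<longrightarrow> (\<forall>k\<in>set ks. k > 0) \<longrightarrow> (\<forall>k\<in>set ns. k > 0) \<longrightarrow>
            sum_list ks + sum_list ns = n \<longrightarrow>
            ssv (block_structure ks ns) (A ^\<^sub>m m) = spec_norm A ^ m))"
  using part1[OF A_carrier n_pos row_sums] part2[OF A_carrier n_pos row_sums]
    part3[OF A_carrier n_pos row_sums] by blast

end
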